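(* Let $P\subset\mathbb{R}^d$ be a set of $n$ points and $s>1$. Every output $\mathcal{W}$ of the greedy $s$-WSPD algorithm (described in the context), regardless of the order in which pairs are chosen, has size $O(n s^d)$, where the implied constant depends only on $d$.
   Context: Fix $d\ge1$; $|xy|$ is Euclidean distance. For $p\in P$ and $r\ge0$, $B_r(p)=\{x\in P:|px|\le r\}$. Greedy $s$-WSPD algorithm: initially no pair of points is covered and $\mathcal{W}=\emptyset$. Repeat until every pair of distinct points of $P$ is covered: choose an arbitrary pair $(p,q)$ of distinct points not yet covered; add the pair $(B_r(p),B_r(q))$ to $\mathcal{W}$ with $r=|pq|/(2s+2)$; mark every pair $(x,y)$ with $x\in B_r(p)$ and $y\in B_r(q)$ as covered. The size of $\mathcal{W}$ is the number of pairs it contains. (The output is an $s$-well-separated pair decomposition: each pair $(A,B)$ satisfies $\min_{x\in A,y\in B}|xy|\ge s\max(\mathrm{diam} A,\mathrm{diam} B)$ and every pair of points is covered.) *)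

theory Defs
  imports "HOL-Analysis.Analysis"
begin

definition ballP :: "'a::euclidean_space set \<Rightarrow> 'a \<Rightarrow> real \<Rightarrow> 'a set" where
  "ballP P p r = {x \<in> P. dist p x \<le> r}"

definition greedy_pair :: "'a::euclidean_space set \<Rightarrow> real \<Rightarrow> 'a \<times> 'a \<Rightarrow> 'a set \<times> 'a set" where
  "greedy_pair P s pq = (let r = dist (fst pq) (snd pq) / (2 * s + 2)
                          in (ballP P (fst pq) r, ballP P (snd pq) r))"

definition covers :: "'a set \<times> 'a set \<Rightarrow> 'a \<Rightarrow> 'a \<Rightarrow> bool" where
  "covers AB x y \<longleftrightarrow> (x \<in> fst AB \<and> y \<in> snd AB) \<or> (y \<in> fst AB \<and> x \<in> snd AB)"

text \<open>A complete run of the greedy s-WSPD algorithm on P: the list of chosen pairs,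
  in order.\<close>
definition greedy_run :: "'a::euclidean_space set \<Rightarrow> real \<Rightarrow> ('a \<times> 'a) list \<Rightarrow> bool" where
  "greedy_run P s ps \<longleftrightarrow>
     (\<forall>i < length ps. fst (ps ! i) \<in> P \<and> snd (ps ! i) \<in> P \<and> fst (ps ! i) \<noteq> snd (ps ! i) \<and>
        (\<forall>j < i. \<not> covers (greedy_pair P s (ps ! j)) (fst (ps ! i)) (snd (ps ! i)))) \<and>
     (\<forall>x \<in> P. \<forall>y \<in> P. x \<noteq> y \<longrightarrow> (\<exists>i < length ps. covers (greedy_pair P s (ps ! i)) x y))"

definition greedy_output :: "'a::euclidean_space set \<Rightarrow> real \<Rightarrow> ('a \<times> 'a) list \<Rightarrow> ('a set \<times> 'a set) set" where
  "greedy_output P s ps = greedy_pair P s ` set ps"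

end

theory Submission
  imports Defs
begin

definition laminar :: "'b set set \<Rightarrow> bool" where
  "laminar F \<longleftrightarrow> (\<forall>A\<in>F. \<forall>B\<in>F. A \<inter> B = {} \<or> A \<subseteq> B \<or> B \<subseteq> A)"

lemma laminar_card:
  assumes "finite X"
  shows "F \<subseteq> Pow X \<Longrightarrow> {} \<notin> F \<Longrightarrow> laminar F \<Longrightarrow> card F \<le> 2 * card X"
  using assms
proof (induction X arbitrary: F rule: finite_induct)
  case empty
  then have "F = {}" by auto
  then show ?case by simp
next
  case (insert x X)
  define F' where "F' = (\<lambda>S. S - {x}) ` F - {{}}"
  have finF: "finite F" using insert.prems(1) insert.hyps(1)
    by (meson finite_Pow_iff finite_insert rev_finite_subset)
  have F'sub: "F' \<subseteq> Pow X" using insert.prems(1) unfolding F'_def by auto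
  have F'lam: "laminar F'" unfolding laminar_def
  proof (intro ballI)
    fix A' B' assume "A' \<in> F'" "B' \<in> F'"
    then obtain A B where AB: "A \<in> F" "B \<in> F" "A' = A - {x}" "B' = B - {x}" unfolding F'_def by auto
    then have "A \<inter> B = {} \<or> A \<subseteq> B \<or> B \<subseteq> A" using insert.prems(3) unfolding laminar_def by blast
    then show "A' \<inter> B' = {} \<or> A' \<subseteq> B' \<or> B' \<subseteq> A'" using AB by blast
  qed
  have IH: "card F' \<le> 2 * card X"
    using insert.IH[OF F'sub _ F'lam] unfolding F'_def by auto
  define E1 where "E1 = {S\<in>F. x \<in> S \<and> S - {x} \<in> F}"
  have E1one: "\<forall>S1\<in>E1. \<forall>S2\<in>E1. S1 = S2"
  proof (intro ballI)
    fix S1 S2 assume a: "S1 \<in> E1" "S2 \<in> E1"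
    have key: "S1 = S2" if "S1 \<in> E1" "S2 \<in> E1" "S1 \<subseteq> S2" for S1 S2
    proof (rule ccontr)
      assume ne: "S1 \<noteq> S2"
      have T2: "S2 - {x} \<in> F" "S1 - {x} \<in> F" "S1 \<in> F" "x \<in> S1" using that unfolding E1_def by auto
      have ne1: "S1 - {x} \<noteq> {}"
      proof
        assume e: "S1 - {x} = {}"
        from T2(2) have "{} \<in> F" by (simp only: e)
        then show False using insert.prems(2) by simp
      qed
      have "S1 - {x} \<subseteq> S1 \<inter> (S2 - {x})" using that(3) by auto
      then have ne2: "S1 \<inter> (S2 - {x}) \<noteq> {}" using ne1 by auto
      have "S1 \<inter> (S2 - {x}) = {} \<or> S1 \<subseteq> S2 - {x} \<or> S2 - {x} \<subseteq> S1"
        using insert.prems(3) T2(1,3) unfolding laminar_def by simp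
      then have "S1 \<subseteq> S2 - {x} \<or> S2 - {x} \<subseteq> S1" using ne2 by simp
      then show False
      proof
        assume "S1 \<subseteq> S2 - {x}" then show False using T2(4) by auto
      next
        assume "S2 - {x} \<subseteq> S1" then have "S2 \<subseteq> S1" using T2(4) by auto
        then show False using that(3) ne by auto
      qed
    qed
    have x12: "x \<in> S1" "x \<in> S2" "S1 \<in> F" "S2 \<in> F" using a unfolding E1_def by auto
    then have "S1 \<inter> S2 \<noteq> {}" by blast
    moreover have "S1 \<inter> S2 = {} \<or> S1 \<subseteq> S2 \<or> S2 \<subseteq> S1"
      using insert.prems(3) x12(3,4) unfolding laminar_def by blast
    ultimately have "S1 \<subseteq> S2 \<or> S2 \<subseteq> S1" by blast
    then show "S1 = S2"
    proof
      assume "S1 \<subseteq> S2" then show ?thesis using key[OF a] by blast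
    next
      assume "S2 \<subseteq> S1" then show ?thesis using key[OF a(2) a(1)] by blast
    qed
  qed
  have cE1: "card E1 \<le> 1"
  proof (cases "E1 = {}")
    case False
    then obtain S where "S \<in> E1" by auto
    then have "E1 = {S}" using E1one by auto
    then show ?thesis by simp
  qed simp
  define E where "E = E1 \<union> ({{x}} \<inter> F)"
  have cE: "card E \<le> 2"
  proof -
    have "card E \<le> card E1 + card ({{x}} \<inter> F)" unfolding E_def by (rule card_Un_le)
    moreover have "card ({{x}} \<inter> F) \<le> 1" by (simp add: card_le_Suc0_iff_eq)
    ultimately show ?thesis using cE1 by linarith
  qed
  have inj: "inj_on (\<lambda>S. S - {x}) (F - E)"
  proof (rule inj_onI)
    fix A B assume ab: "A \<in> F - E" "B \<in> F - E" "A - {x} = B - {x}"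
    show "A = B"
    proof (rule ccontr)
      assume "A \<noteq> B"
      then have "(x \<in> A \<and> x \<notin> B) \<or> (x \<in> B \<and> x \<notin> A)" using ab(3) by blast
      then show False
      proof
        assume h: "x \<in> A \<and> x \<notin> B"
        then have "A - {x} = B" using ab(3) by auto
        then have "A \<in> E1" using ab h unfolding E1_def by auto
        then show False using ab unfolding E_def by auto
      next
        assume h: "x \<in> B \<and> x \<notin> A"
        then have "B - {x} = A" using ab(3) by auto
        then have "B \<in> E1" using ab h unfolding E1_def by auto
        then show False using ab unfolding E_def by auto
      qed
    qed
  qed
  have img: "(\<lambda>S. S - {x}) ` (F - E) \<subseteq> F'"
  proof
    fix T assume "T \<in> (\<lambda>S. S - {x}) ` (F - E)"
    then obtain S where S: "S \<in> F" "S \<notin> E" "T = S - {x}" by auto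
    have "S \<noteq> {}" using S insert.prems(2) by auto
    have "S \<noteq> {x}" using S unfolding E_def by auto
    then have "T \<noteq> {}" using S \<open>S \<noteq> {}\<close> by auto
    then show "T \<in> F'" using S unfolding F'_def by auto
  qed
  have finF': "finite F'" using F'sub insert.hyps(1) by (meson finite_Pow_iff rev_finite_subset)
  have "card (F - E) \<le> card F'"
    using card_inj_on_le[OF inj img finF'] .
  moreover have "card F \<le> card (F - E) + card E"
  proof -
    have fE: "finite E" unfolding E_def E1_def using finF by auto
    have "card F \<le> card ((F - E) \<union> E)" by (rule card_mono) (use finF fE in auto)
    also have "\<dots> \<le> card (F - E) + card E" by (rule card_Un_le)
    finally show ?thesis .
  qed
  ultimately have "card F \<le> card F' + 2" using cE by linarith
  then show ?case using IH insert.hyps by simp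
qed


definition cellf :: "'a::euclidean_space \<Rightarrow> int \<Rightarrow> 'a \<Rightarrow> ('a \<Rightarrow> int)" where
  "cellf z0 k x = (\<lambda>b\<in>Basis. \<lfloor>((x - z0) \<bullet> b) / 2 powr k\<rfloor>)"

lemma cell_eq_iff:
  "cellf z0 k x = cellf z0 k y \<longleftrightarrow>
    (\<forall>b\<in>Basis. \<lfloor>((x - z0) \<bullet> b) / 2 powr k\<rfloor> = \<lfloor>((y - z0) \<bullet> b) / 2 powr k\<rfloor>)"
proof
  assume h: "cellf z0 k x = cellf z0 k y"
  show "\<forall>b\<in>Basis. \<lfloor>((x - z0) \<bullet> b) / 2 powr k\<rfloor> = \<lfloor>((y - z0) \<bullet> b) / 2 powr k\<rfloor>"
  proof
    fix b :: 'a assume "b \<in> Basis"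
    then show "\<lfloor>((x - z0) \<bullet> b) / 2 powr k\<rfloor> = \<lfloor>((y - z0) \<bullet> b) / 2 powr k\<rfloor>"
      using fun_cong[OF h, of b] by (simp add: cellf_def)
  qed
next
  assume "\<forall>b\<in>Basis. \<lfloor>((x - z0) \<bullet> b) / 2 powr k\<rfloor> = \<lfloor>((y - z0) \<bullet> b) / 2 powr k\<rfloor>"
  then show "cellf z0 k x = cellf z0 k y" unfolding cellf_def by (intro restrict_ext) auto
qed

lemma floor_half: "\<lfloor>t / 2 powr (real_of_int (k + 1))\<rfloor> = \<lfloor>t / 2 powr (real_of_int k)\<rfloor> div 2"
proof -
  have "2 powr (real_of_int (k + 1)) = 2 powr (real_of_int k) * real_of_int 2"
    by (simp add: powr_add)
  then have e: "t / 2 powr (real_of_int (k + 1)) = (t / 2 powr (real_of_int k)) / real_of_int 2" by simp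
  have "\<lfloor>(t / 2 powr (real_of_int k)) / real_of_int 2\<rfloor> = \<lfloor>t / 2 powr (real_of_int k)\<rfloor> div 2"
    by (rule floor_divide_real_eq_div) simp
  then show ?thesis unfolding e .
qed

lemma cell_step: "cellf z0 k x = cellf z0 k y \<Longrightarrow> cellf z0 (k + 1) x = cellf z0 (k + 1) y"
  unfolding cell_eq_iff using floor_half by metis

lemma cell_mono: "k \<le> h \<Longrightarrow> cellf z0 k x = cellf z0 k y \<Longrightarrow> cellf z0 h x = cellf z0 h y"
proof (induction h rule: int_ge_induct)
  case base then show ?case by simp
next
  case (step i) then show ?case using cell_step by blast
qed

lemma cell_dist:
  fixes x :: "'a::euclidean_space"
  assumes "cellf z0 k x = cellf z0 k y"
  shows "dist x y \<le> real DIM('a) * 2 powr k"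
proof -
  have c: "\<bar>((x - z0) \<bullet> b) - ((y - z0) \<bullet> b)\<bar> < 2 powr k" if "b \<in> Basis" for b
  proof -
    let ?a = "2 powr (real_of_int k)"
    have a: "?a > 0" by simp
    have fe: "\<lfloor>((x - z0) \<bullet> b) / ?a\<rfloor> = \<lfloor>((y - z0) \<bullet> b) / ?a\<rfloor>" using assms that unfolding cell_eq_iff by blast
    have "\<bar>((x - z0) \<bullet> b) / ?a - ((y - z0) \<bullet> b) / ?a\<bar> < 1"
      using fe by linarith
    then have "\<bar>((x - z0) \<bullet> b) - ((y - z0) \<bullet> b)\<bar> / ?a < 1" using a by (simp add: diff_divide_distrib[symmetric])
    then show ?thesis using a by (simp add: divide_less_eq)
  qed
  have "dist x y = norm ((x - z0) - (y - z0))" by (simp add: dist_norm)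
  also have "\<dots> \<le> (\<Sum>b\<in>Basis. \<bar>((x - z0) - (y - z0)) \<bullet> b\<bar>)" by (rule norm_le_l1)
  also have "\<dots> \<le> (\<Sum>b\<in>(Basis::'a set). 2 powr k)"
    by (rule sum_mono) (use c in \<open>auto simp: inner_diff_left less_imp_le\<close>)
  also have "\<dots> = real DIM('a) * 2 powr k" by simp
  finally show ?thesis .
qed

lemma cell_large:
  assumes "\<forall>b\<in>Basis. 0 \<le> (x - z0) \<bullet> b \<and> (x - z0) \<bullet> b < 2 powr k"
  shows "cellf z0 k x = (\<lambda>b\<in>Basis. 0)"
  unfolding cellf_def
proof (rule restrict_ext)
  fix b :: 'a assume "b \<in> Basis"
  then have "0 \<le> (x - z0) \<bullet> b" "(x - z0) \<bullet> b < 2 powr k" using assms by auto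
  then show "\<lfloor>((x - z0) \<bullet> b) / 2 powr k\<rfloor> = 0"
    by (simp add: floor_eq_iff divide_less_eq)
qed

lemma cell_pack:
  fixes y0 :: "'a::euclidean_space"
  assumes "\<rho> \<ge> 0"
  shows "real (card (cellf z0 h ` {q\<in>P. dist y0 q \<le> \<rho>})) \<le> (2 * \<rho> / 2 powr h + 2) ^ DIM('a)"
proof -
  let ?a = "2 powr (real_of_int h)"
  have a: "?a > 0" by simp
  define lo where "lo b = \<lfloor>(((y0 - z0) \<bullet> b) - \<rho>) / ?a\<rfloor>" for b
  define hi where "hi b = \<lfloor>(((y0 - z0) \<bullet> b) + \<rho>) / ?a\<rfloor>" for b
  have sub: "cellf z0 h ` {q\<in>P. dist y0 q \<le> \<rho>} \<subseteq> PiE Basis (\<lambda>b. {lo b..hi b})"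
  proof
    fix c assume "c \<in> cellf z0 h ` {q\<in>P. dist y0 q \<le> \<rho>}"
    then obtain q where q: "dist y0 q \<le> \<rho>" "c = cellf z0 h q" by auto
    have "c b \<in> {lo b..hi b}" if b: "b \<in> Basis" for b
    proof -
      have "\<bar>(q - y0) \<bullet> b\<bar> \<le> norm (q - y0)" using b by (rule Basis_le_norm)
      also have "\<dots> \<le> \<rho>" using q by (simp add: dist_norm norm_minus_commute)
      finally have "\<bar>(q - z0) \<bullet> b - (y0 - z0) \<bullet> b\<bar> \<le> \<rho>" by (simp add: inner_diff_left)
      then have i1: "((y0 - z0) \<bullet> b - \<rho>) / ?a \<le> ((q - z0) \<bullet> b) / ?a"
        and i2: "((q - z0) \<bullet> b) / ?a \<le> ((y0 - z0) \<bullet> b + \<rho>) / ?a"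
        using a by (auto intro!: divide_right_mono)
      have "c b = \<lfloor>((q - z0) \<bullet> b) / ?a\<rfloor>" using q b unfolding cellf_def by simp
      then show ?thesis unfolding lo_def hi_def using i1 i2 by (auto intro: floor_mono)
    qed
    moreover have "c \<in> extensional Basis" using q unfolding cellf_def by simp
    ultimately show "c \<in> PiE Basis (\<lambda>b. {lo b..hi b})" by (auto simp: PiE_iff)
  qed
  have "card (cellf z0 h ` {q\<in>P. dist y0 q \<le> \<rho>}) \<le> card (PiE Basis (\<lambda>b. {lo b..hi b}))"
    by (rule card_mono[OF _ sub]) (simp add: finite_PiE)
  also have "\<dots> = (\<Prod>b\<in>Basis. nat (hi b - lo b + 1))" by (simp add: card_PiE)
  finally have c1: "card (cellf z0 h ` {q\<in>P. dist y0 q \<le> \<rho>}) \<le> (\<Prod>b\<in>Basis. nat (hi b - lo b + 1))" .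
  have "real (card (cellf z0 h ` {q\<in>P. dist y0 q \<le> \<rho>})) \<le> real (\<Prod>b\<in>Basis. nat (hi b - lo b + 1))"
    using c1 by (rule of_nat_mono)
  also have "\<dots> = (\<Prod>b\<in>Basis. real (nat (hi b - lo b + 1)))" by (rule of_nat_prod)
  also have "\<dots> \<le> (\<Prod>b\<in>(Basis::'a set). 2 * \<rho> / 2 powr h + 2)"
  proof (rule prod_mono)
    fix b :: 'a assume "b \<in> Basis"
    have h1: "real_of_int (hi b) \<le> (((y0 - z0) \<bullet> b) + \<rho>) / ?a" unfolding hi_def by linarith
    have h2: "real_of_int (lo b) > (((y0 - z0) \<bullet> b) - \<rho>) / ?a - 1" unfolding lo_def by linarith
    have e: "(((y0 - z0) \<bullet> b) + \<rho>) / ?a - ((((y0 - z0) \<bullet> b) - \<rho>) / ?a) = 2 * \<rho> / ?a"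
      by (simp add: diff_divide_distrib[symmetric])
    have lohi: "lo b \<le> hi b" unfolding lo_def hi_def using assms a
      by (intro floor_mono divide_right_mono) auto
    then have "real (nat (hi b - lo b + 1)) = real_of_int (hi b) - real_of_int (lo b) + 1" by simp
    also have "\<dots> \<le> 2 * \<rho> / ?a + 2" using h1 h2 e by linarith
    finally show "0 \<le> real (nat (hi b - lo b + 1)) \<and> real (nat (hi b - lo b + 1)) \<le> 2 * \<rho> / 2 powr h + 2"
      by simp
  qed
  also have "\<dots> = (2 * \<rho> / 2 powr h + 2) ^ DIM('a)" by simp
  finally show ?thesis .
qed


definition clu :: "'a::euclidean_space set \<Rightarrow> 'a \<Rightarrow> int \<Rightarrow> 'a \<Rightarrow> 'a set" where
  "clu P z0 k x = {y\<in>P. cellf z0 k y = cellf z0 k x}"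

lemma clu_self: "x \<in> P \<Longrightarrow> x \<in> clu P z0 k x"
  unfolding clu_def by simp

lemma clu_same: "y \<in> clu P z0 k x \<Longrightarrow> clu P z0 k y = clu P z0 k x"
  unfolding clu_def by auto

lemma clu_mono: "k \<le> h \<Longrightarrow> clu P z0 k x \<subseteq> clu P z0 h x"
  unfolding clu_def using cell_mono by blast

lemma clu_dist: "y \<in> clu P z0 k x \<Longrightarrow> dist x y \<le> real DIM('a) * 2 powr k"
  for x :: "'a::euclidean_space"
  unfolding clu_def using cell_dist by (metis (mono_tags, lifting) mem_Collect_eq)

lemma clu_sub: "clu P z0 k x \<subseteq> P"
  unfolding clu_def by auto

lemma clu_laminar: "laminar {clu P z0 k x | k x. x \<in> P}"
proof -
  have *: "A \<inter> B = {} \<or> A \<subseteq> B"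
    if "A = clu P z0 k x" "B = clu P z0 h y" "k \<le> h" for A B k h x y
  proof (cases "A \<inter> B = {}")
    case False
    then obtain z where z: "z \<in> A" "z \<in> B" by auto
    have "A = clu P z0 k z" using z that clu_same by metis
    also have "\<dots> \<subseteq> clu P z0 h z" using that(3) by (rule clu_mono)
    also have "\<dots> = B" using z that clu_same by metis
    finally show ?thesis by simp
  qed simp
  show ?thesis unfolding laminar_def
  proof (intro ballI)
    fix A B assume "A \<in> {clu P z0 k x | k x. x \<in> P}" "B \<in> {clu P z0 k x | k x. x \<in> P}"
    then obtain k x h y where "A = clu P z0 k x" "B = clu P z0 h y" by auto
    note ab = this
    show "A \<inter> B = {} \<or> A \<subseteq> B \<or> B \<subseteq> A"
    proof (cases "k \<le> h")
      case True
      then show ?thesis using *[OF ab True] by blast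
    next
      case False
      then have "h \<le> k" by simp
      then have "B \<inter> A = {} \<or> B \<subseteq> A" using *[OF ab(2) ab(1)] by blast
      then show ?thesis by blast
    qed
  qed
qed

lemma top_unique_aux:
  assumes "y \<in> P" "A = clu P z0 h y" "clu P z0 (h + 1) y \<noteq> A"
    and "y' \<in> P" "A = clu P z0 h' y'" "h < h'"
  shows False
proof -
  have y'A: "y' \<in> A" using assms(4,5) clu_self by metis
  then have a1: "clu P z0 h y' = A" using assms(2) clu_same by metis
  have m1: "clu P z0 h y' \<subseteq> clu P z0 (h + 1) y'" by (rule clu_mono) simp
  have m2: "clu P z0 (h + 1) y' \<subseteq> clu P z0 h' y'" by (rule clu_mono) (use assms(6) in simp)
  have a2: "clu P z0 (h + 1) y' = A" using m1 m2 a1 assms(5) by blast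
  have m3: "clu P z0 h y \<subseteq> clu P z0 (h + 1) y" by (rule clu_mono) simp
  have "y' \<in> clu P z0 (h + 1) y" using y'A assms(2) m3 by blast
  then have "clu P z0 (h + 1) y' = clu P z0 (h + 1) y" by (rule clu_same)
  then show False using a2 assms(3) by simp
qed

lemma top_unique:
  assumes "y \<in> P" "A = clu P z0 h y" "clu P z0 (h + 1) y \<noteq> A"
    and "y' \<in> P" "A = clu P z0 h' y'" "clu P z0 (h' + 1) y' \<noteq> A"
  shows "h = h'"
proof (rule ccontr)
  assume "h \<noteq> h'"
  then have "h < h' \<or> h' < h" by linarith
  then show False
  proof
    assume "h < h'" then show False using top_unique_aux[OF assms(1,2,3,4,5)] by blast
  next
    assume "h' < h" then show False using top_unique_aux[OF assms(4,5,6,1,2)] by blast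
  qed
qed

lemma partners_bound:
  fixes P :: "'a::euclidean_space set"
  assumes fin: "finite P" and s: "s > 1"
  shows "real (card {clu P z0 h q | h q. (\<exists>y\<in>P. A = clu P z0 h y \<and> clu P z0 (h+1) y \<noteq> A) \<and> q \<in> P
            \<and> (\<exists>y\<in>A. dist y q \<le> 4 * real DIM('a) * (s+1) * 2 powr h)}) \<le> (20 * real DIM('a) * s) ^ DIM('a)"
    (is "real (card ?Par) \<le> _")
proof (cases "\<exists>h y. y \<in> P \<and> A = clu P z0 h y \<and> clu P z0 (h+1) y \<noteq> A")
  case False
  then have e: "?Par = {}" by blast
  have c: "card ?Par = 0" by (simp only: e card.empty)
  have "0 \<le> (20 * real DIM('a) * s) ^ DIM('a)" using s by simp
  then show ?thesis by (simp only: c of_nat_0)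
next
  case True
  let ?d = "real DIM('a)"
  have d1: "?d \<ge> 1" by (simp add: DIM_positive Suc_leI)
  then obtain h0 y0 where h0: "y0 \<in> P" "A = clu P z0 h0 y0" "clu P z0 (h0+1) y0 \<noteq> A" using True by blast
  define \<rho> where "\<rho> = ?d * 2 powr h0 + 4 * ?d * (s+1) * 2 powr h0"
  have rho0: "\<rho> \<ge> 0" unfolding \<rho>_def using s by simp
  have sub: "?Par \<subseteq> (\<lambda>c. {y\<in>P. cellf z0 h0 y = c}) ` (cellf z0 h0 ` {q\<in>P. dist y0 q \<le> \<rho>})"
  proof
    fix X assume "X \<in> ?Par"
    then obtain h q y' y where X: "X = clu P z0 h q" "y' \<in> P" "A = clu P z0 h y'" "clu P z0 (h+1) y' \<noteq> A"
      "q \<in> P" "y \<in> A" "dist y q \<le> 4 * ?d * (s+1) * 2 powr h" by blast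
    have "h = h0" using top_unique[OF X(2,3,4) h0] .
    have "dist y0 y \<le> ?d * 2 powr h0" using X(6) h0(2) clu_dist by metis
    moreover have "dist y q \<le> 4 * ?d * (s+1) * 2 powr h0" using X(7) \<open>h = h0\<close> by simp
    ultimately have "dist y0 q \<le> \<rho>" using dist_triangle[of y0 q y] unfolding \<rho>_def by linarith
    moreover have "X = {y\<in>P. cellf z0 h0 y = cellf z0 h0 q}" using X(1) \<open>h = h0\<close> unfolding clu_def by simp
    ultimately show "X \<in> (\<lambda>c. {y\<in>P. cellf z0 h0 y = c}) ` (cellf z0 h0 ` {q\<in>P. dist y0 q \<le> \<rho>})"
      using X(5) by blast
  qed
  have "card ?Par \<le> card ((\<lambda>c. {y\<in>P. cellf z0 h0 y = c}) ` (cellf z0 h0 ` {q\<in>P. dist y0 q \<le> \<rho>}))"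
    by (rule card_mono[OF _ sub]) (use fin in auto)
  also have "\<dots> \<le> card (cellf z0 h0 ` {q\<in>P. dist y0 q \<le> \<rho>})"
    by (rule card_image_le) (use fin in auto)
  finally have "real (card ?Par) \<le> real (card (cellf z0 h0 ` {q\<in>P. dist y0 q \<le> \<rho>}))" by simp
  also have "\<dots> \<le> (2 * \<rho> / 2 powr h0 + 2) ^ DIM('a)" by (rule cell_pack[OF rho0])
  also have "2 * \<rho> / 2 powr h0 + 2 = 2 * ?d + 8 * ?d * (s+1) + 2" unfolding \<rho>_def by (simp add: field_simps)
  also have "(2 * ?d + 8 * ?d * (s+1) + 2) ^ DIM('a) \<le> (20 * ?d * s) ^ DIM('a)"
  proof (rule power_mono)
    have "12 * ?d \<le> 12 * ?d * s" using s d1 by simp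
    moreover have "8 * ?d * (s+1) = 8 * (?d * s) + 8 * ?d" "20 * ?d * s = 20 * (?d * s)" "12 * ?d * s = 12 * (?d * s)"
      by (simp_all add: algebra_simps)
    ultimately show "2 * ?d + 8 * ?d * (s+1) + 2 \<le> 20 * ?d * s" using d1 by linarith
  qed (use d1 s in simp)
  finally show ?thesis .
qed


lemma main_bound:
  fixes P :: "'a::euclidean_space set"
  assumes fin: "finite P" and s: "s > 1" and run: "greedy_run P s ps"
  shows "real (length ps) \<le> 2 * real (card P) * (20 * real DIM('a) * s) ^ DIM('a)"
proof -
  let ?d = "real DIM('a)"
  have d1: "?d \<ge> 1" by (simp add: DIM_positive Suc_leI)
  define M where "M = (\<Sum>x\<in>P. norm x)"
  define z0 :: 'a where "z0 = - ((M + 1) *\<^sub>R (\<Sum>b\<in>Basis. b))"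
  have coord: "(x - z0) \<bullet> b = x \<bullet> b + (M + 1)" if "b \<in> Basis" for x b
    using that unfolding z0_def by (simp add: inner_sum_left inner_Basis algebra_simps sum.delta)
  have xb: "\<bar>x \<bullet> b\<bar> \<le> M" if "x \<in> P" "b \<in> Basis" for x b
  proof -
    have "\<bar>x \<bullet> b\<bar> \<le> norm x" using that(2) by (rule Basis_le_norm)
    also have "\<dots> \<le> M" unfolding M_def using fin that(1) by (intro member_le_sum) auto
    finally show ?thesis .
  qed
  obtain N :: nat where N: "2 * M + 1 < 2 ^ N" using real_arch_pow[of 2 "2 * M + 1"] by auto
  have big: "clu P z0 h x = P" if "int N \<le> h" "x \<in> P" for h x
  proof -
    have "(2::real) ^ N = 2 powr (real N)" by (simp add: powr_realpow)
    also have "\<dots> \<le> 2 powr (real_of_int h)" using that(1) by (intro powr_mono) auto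
    finally have pw: "2 * M + 1 < 2 powr h" using N by linarith
    have z: "cellf z0 h y = (\<lambda>b\<in>Basis. 0)" if "y \<in> P" for y
      by (rule cell_large) (use coord xb that pw in \<open>fastforce\<close>)
    show ?thesis unfolding clu_def using z that(2) by auto
  qed
  define p where "p i = fst (ps ! i)" for i
  define q where "q i = snd (ps ! i)" for i
  define r where "r i = dist (p i) (q i) / (2 * s + 2)" for i
  define k where "k i = \<lfloor>log 2 (r i / ?d)\<rfloor>" for i
  have pq: "p i \<in> P" "q i \<in> P" "p i \<noteq> q i"
    "\<forall>j<i. \<not> covers (greedy_pair P s (ps ! j)) (p i) (q i)" if "i < length ps" for i
    using run that unfolding greedy_run_def p_def q_def by auto
  have rpos: "r i > 0" if "i < length ps" for i
    using pq[OF that] s unfolding r_def by simp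
  have kprop: "?d * 2 powr (k i) \<le> r i" "r i < 2 * ?d * 2 powr (k i)" if "i < length ps" for i
  proof -
    have pos: "r i / ?d > 0" using rpos[OF that] d1 by simp
    have "2 powr (k i) \<le> 2 powr (log 2 (r i / ?d))" unfolding k_def by (intro powr_mono) auto
    also have "\<dots> = r i / ?d" using pos by simp
    finally show "?d * 2 powr (k i) \<le> r i" using d1 by (simp add: field_simps)
    have "r i / ?d = 2 powr (log 2 (r i / ?d))" using pos by simp
    also have "\<dots> < 2 powr (real_of_int (k i + 1))" unfolding k_def by (intro powr_less_mono) linarith+
    also have "\<dots> = 2 * 2 powr (k i)" by (simp add: powr_add)
    finally show "r i < 2 * ?d * 2 powr (k i)" using d1 by (simp add: field_simps)
  qed
  have gp: "greedy_pair P s (ps ! j) = (ballP P (p j) (r j), ballP P (q j) (r j))" for j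
    unfolding greedy_pair_def p_def q_def r_def Let_def by simp
  define S where "S i = clu P z0 (k i) (p i)" for i
  define T where "T i = clu P z0 (k i) (q i)" for i
  define Phi where "Phi i = {S i, T i}" for i
  have inj_aux: False if ij: "j < i" "i < length ps" "Phi i = Phi j" for i j
  proof -
    have jl: "j < length ps" using ij by simp
    have inb: "x \<in> ballP P y (r j)" if "x \<in> clu P z0 (k j) y" for x y
      using that clu_dist[OF that] kprop(1)[OF jl] clu_sub unfolding ballP_def by fastforce
    have "(S i = S j \<and> T i = T j) \<or> (S i = T j \<and> T i = S j)" using ij(3) unfolding Phi_def
      by (simp add: doubleton_eq_iff)
    then have "covers (greedy_pair P s (ps ! j)) (p i) (q i)"
    proof
      assume a: "S i = S j \<and> T i = T j"
      have "p i \<in> S j" using a clu_self pq(1)[OF ij(2)] unfolding S_def by metis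
      moreover have "q i \<in> T j" using a clu_self pq(2)[OF ij(2)] unfolding T_def by metis
      ultimately show ?thesis unfolding covers_def gp S_def T_def using inb by auto
    next
      assume a: "S i = T j \<and> T i = S j"
      have "p i \<in> T j" using a clu_self pq(1)[OF ij(2)] unfolding S_def by metis
      moreover have "q i \<in> S j" using a clu_self pq(2)[OF ij(2)] unfolding T_def by metis
      ultimately show ?thesis unfolding covers_def gp S_def T_def using inb by auto
    qed
    then show False using pq(4)[OF ij(2)] ij(1) by blast
  qed
  have inj: "inj_on Phi {..<length ps}"
  proof (rule inj_onI)
    fix i j assume "i \<in> {..<length ps}" "j \<in> {..<length ps}" "Phi i = Phi j"
    then show "i = j" using inj_aux[of j i] inj_aux[of i j] by (metis lessThan_iff linorder_neqE_nat)
  qed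
  define F where "F = {clu P z0 k x | k x. x \<in> P}"
  define Par where "Par A = {clu P z0 h q | h q. (\<exists>y\<in>P. A = clu P z0 h y \<and> clu P z0 (h+1) y \<noteq> A) \<and> q \<in> P
            \<and> (\<exists>y\<in>A. dist y q \<le> 4 * ?d * (s+1) * 2 powr h)}" for A
  have phi_in: "Phi i \<in> (\<lambda>(A, B). {A, B}) ` Sigma F Par" if il: "i < length ps" for i
  proof -
    have L: "dist (p i) (q i) = (2 * s + 2) * r i" unfolding r_def using s by simp
    have qnS: "q i \<notin> S i"
    proof
      assume "q i \<in> S i"
      then have "dist (p i) (q i) \<le> ?d * 2 powr (k i)" unfolding S_def by (rule clu_dist)
      then have "dist (p i) (q i) \<le> r i" using kprop(1)[OF il] by linarith
      moreover have "1 * r i < (2 * s + 2) * r i" using rpos[OF il] s by (intro mult_strict_right_mono) auto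
      ultimately show False using L by linarith
    qed
    define Hs where "Hs = {h. k i \<le> h \<and> clu P z0 h (p i) = S i \<and> clu P z0 h (q i) = T i}"
    have Hsub: "Hs \<subseteq> {k i..<int N}"
    proof
      fix h assume h: "h \<in> Hs"
      have "h < int N"
      proof (rule ccontr)
        assume "\<not> h < int N"
        then have "clu P z0 h (p i) = P" using big pq(1)[OF il] by simp
        then have "S i = P" using h unfolding Hs_def by simp
        then show False using qnS pq(2)[OF il] by simp
      qed
      then show "h \<in> {k i..<int N}" using h unfolding Hs_def by simp
    qed
    have finH: "finite Hs" using finite_subset[OF Hsub] by simp
    have kH: "k i \<in> Hs" unfolding Hs_def S_def T_def by simp
    define h where "h = Max Hs"
    have hH: "h \<in> Hs" unfolding h_def using finH kH by (intro Max_in) auto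
    have "h + 1 \<notin> Hs" using Max_ge[OF finH, of "h+1"] unfolding h_def by auto
    then have chg: "clu P z0 (h+1) (p i) \<noteq> S i \<or> clu P z0 (h+1) (q i) \<noteq> T i"
      using hH unfolding Hs_def by auto
    have hk: "k i \<le> h" and hS: "clu P z0 h (p i) = S i" and hT: "clu P z0 h (q i) = T i"
      using hH unfolding Hs_def by auto
    have "dist (p i) (q i) < (2 * s + 2) * (2 * ?d * 2 powr (k i))"
      using L kprop(2)[OF il] s by simp
    also have "\<dots> \<le> (2 * s + 2) * (2 * ?d * 2 powr h)" using hk s by (intro mult_left_mono powr_mono) auto
    also have "\<dots> = 4 * ?d * (s+1) * 2 powr h" by (simp add: algebra_simps)
    finally have Ld: "dist (p i) (q i) \<le> 4 * ?d * (s+1) * 2 powr h" by simp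
    have SF: "S i \<in> F" "T i \<in> F" unfolding F_def S_def T_def using pq(1,2)[OF il] by auto
    have pS: "p i \<in> S i" unfolding S_def by (rule clu_self[OF pq(1)[OF il]])
    have qT: "q i \<in> T i" unfolding T_def by (rule clu_self[OF pq(2)[OF il]])
    from chg show ?thesis
    proof
      assume c: "clu P z0 (h+1) (p i) \<noteq> S i"
      have t1: "\<exists>y\<in>P. S i = clu P z0 h y \<and> clu P z0 (h+1) y \<noteq> S i"
        by (rule bexI[of _ "p i"]) (use hS c pq(1)[OF il] in simp_all)
      have t2: "\<exists>y\<in>S i. dist y (q i) \<le> 4 * ?d * (s+1) * 2 powr h"
        by (rule bexI[of _ "p i"]) (use Ld pS in simp_all)
      have "T i \<in> Par (S i)" unfolding Par_def
        by (intro CollectI exI[of _ h] exI[of _ "q i"] conjI) (use hT t1 t2 pq(2)[OF il] in simp_all)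
      then have "(S i, T i) \<in> Sigma F Par" using SF by simp
      then show ?thesis unfolding Phi_def by (rule rev_image_eqI) simp
    next
      assume c: "clu P z0 (h+1) (q i) \<noteq> T i"
      have Ld': "dist (q i) (p i) \<le> 4 * ?d * (s+1) * 2 powr h" using Ld by (simp add: dist_commute)
      have t1: "\<exists>y\<in>P. T i = clu P z0 h y \<and> clu P z0 (h+1) y \<noteq> T i"
        by (rule bexI[of _ "q i"]) (use hT c pq(2)[OF il] in simp_all)
      have t2: "\<exists>y\<in>T i. dist y (p i) \<le> 4 * ?d * (s+1) * 2 powr h"
        by (rule bexI[of _ "q i"]) (use Ld' qT in simp_all)
      have "S i \<in> Par (T i)" unfolding Par_def
        by (intro CollectI exI[of _ h] exI[of _ "p i"] conjI) (use hS t1 t2 pq(1)[OF il] in simp_all)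
      then have "(T i, S i) \<in> Sigma F Par" using SF by simp
      moreover have "Phi i = (\<lambda>(A, B). {A, B}) (T i, S i)" unfolding Phi_def by (simp add: insert_commute)
      ultimately show ?thesis by (rule image_eqI[rotated])
    qed
  qed
  have "F \<subseteq> Pow P" unfolding F_def clu_def by auto
  then have finF: "finite F" using fin by (simp add: finite_subset)
  have finPar: "finite (Par A)" for A
  proof -
    have "Par A \<subseteq> Pow P" unfolding Par_def clu_def by auto
    then show ?thesis using fin by (simp add: finite_subset)
  qed
  have FP: "F \<subseteq> Pow P" unfolding F_def clu_def by auto
  have Fne: "{} \<notin> F"
  proof
    assume "{} \<in> F"
    then obtain k x where kx: "x \<in> P" "{} = clu P z0 k x" unfolding F_def by blast
    then show False using clu_self[OF kx(1), of z0 k] by simp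
  qed
  have Flam: "laminar F" unfolding F_def by (rule clu_laminar)
  have cF: "card F \<le> 2 * card P" by (rule laminar_card[OF fin FP Fne Flam])
  have "length ps = card (Phi ` {..<length ps})" using card_image[OF inj] by simp
  also have "\<dots> \<le> card ((\<lambda>(A, B). {A, B}) ` Sigma F Par)"
    by (rule card_mono) (use phi_in finF finPar in auto)
  also have "\<dots> \<le> card (Sigma F Par)" by (rule card_image_le) (use finF finPar in auto)
  also have "\<dots> = (\<Sum>A\<in>F. card (Par A))" by (rule card_SigmaI) (use finF finPar in auto)
  finally have c1: "length ps \<le> (\<Sum>A\<in>F. card (Par A))" .
  have "real (length ps) \<le> real (\<Sum>A\<in>F. card (Par A))" using c1 by (rule of_nat_mono)
  also have "\<dots> = (\<Sum>A\<in>F. real (card (Par A)))" by (rule of_nat_sum)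
  also have "\<dots> \<le> (\<Sum>A\<in>F. (20 * ?d * s) ^ DIM('a))"
    by (rule sum_mono) (unfold Par_def, rule partners_bound[OF fin s])
  also have "\<dots> = real (card F) * (20 * ?d * s) ^ DIM('a)" by simp
  also have "\<dots> \<le> 2 * real (card P) * (20 * ?d * s) ^ DIM('a)"
    using cF s by (intro mult_right_mono) auto
  finally show ?thesis .
qed

theorem theorem8:
  "\<exists>C::real. \<forall>(P::'a::euclidean_space set) (s::real) ps.
     finite P \<longrightarrow> s > 1 \<longrightarrow> greedy_run P s ps \<longrightarrow>
     real (card (greedy_output P s ps)) \<le> C * real (card P) * s ^ DIM('a)"
proof (intro exI allI impI)
  fix P :: "'a set" and s :: real and ps
  assume a: "finite P" "s > 1" "greedy_run P s ps"
  have "card (greedy_output P s ps) \<le> card (set ps)" unfolding greedy_output_def by (rule card_image_le) simp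
  also have "\<dots> \<le> length ps" by (rule card_length)
  finally have "real (card (greedy_output P s ps)) \<le> real (length ps)" by simp
  also have "\<dots> \<le> 2 * real (card P) * (20 * real DIM('a) * s) ^ DIM('a)" by (rule main_bound[OF a])
  also have "\<dots> = (2 * (20 * real DIM('a)) ^ DIM('a)) * real (card P) * s ^ DIM('a)"
    by (simp add: power_mult_distrib)
  finally show "real (card (greedy_output P s ps)) \<le> (2 * (20 * real DIM('a)) ^ DIM('a)) * real (card P) * s ^ DIM('a)" .
qed

end
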